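(* Let $H=(W,F)$ be a simple undirected graph with a designated root $r_1\in W$ and a set of terminals $S=\{s_1,\dots,s_k\}\subseteq W\setminus\{r_1\}$ with $k\ge 2$, such that no edge of $H$ joins two terminals. Let $H'$, $H'_1$, $H'_2$, $M_1$, $M_2$ and $g$ be as defined in the context. Then for every $S$-wide spanning tree $T$ of $H$ there exists a set $J\subseteq F'$ that is a basis of both $M_1$ and $M_2$ with $g(J)=T$.
   Context: A spanning tree $T$ of $H$ is $S$-wide if every connected component of $T-r_1$ contains at most one terminal. $H'=(W',F')$ is obtained from $H$ by adding $k-1$ new vertices $r_2,\dots,r_k$ and, for each edge $r_1x\in F$ and each $i\in\{2,\dots,k\}$, a new edge $r_ix$. $H'_1$ is the multigraph obtained from $H'$ by identifying $r_1,\dots,r_k$ into a single vertex (keeping parallel edges), and $H'_2$ is the multigraph obtained from $H'$ by identifying $s_1,\dots,s_k$ into a single vertex (keeping parallel edges and loops); both have edge set $F'$. $M_1$ and $M_2$ are the graphic matroids of $H'_1$ and $H'_2$ on ground set $F'$. Define $f:F'\to F$ by $f(xy)=r_1y$ if $x\in\{r_1,\dots,r_k\}$, $f(xy)=xr_1$ if $y\in\{r_1,\dots,r_k\}$, and $f(xy)=xy$ otherwise; for $J\subseteq F'$, $g(J)=\{f(e):e\in J\}$ (an edge set of $H$). *)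

theory Defs
  imports Main
begin

text \<open>Multigraphs are given by an edge ground set together with an endpoint map
  ends :: 'e => 'v set (ends e = {u,v}; a loop has ends e = {u}).\<close>

definition is_walk :: "('e \<Rightarrow> 'v set) \<Rightarrow> 'e list \<Rightarrow> 'v list \<Rightarrow> bool" where
  "is_walk ends es vs \<longleftrightarrow> length vs = Suc (length es) \<and>
     (\<forall>i<length es. ends (es ! i) = {vs ! i, vs ! Suc i})"

definition reach :: "('e \<Rightarrow> 'v set) \<Rightarrow> 'e set \<Rightarrow> 'v \<Rightarrow> 'v \<Rightarrow> bool" where
  "reach ends E u v \<longleftrightarrow> (\<exists>es vs. set es \<subseteq> E \<and> is_walk ends es vs \<and> hd vs = u \<and> last vs = v)"

text \<open>No cycle: no nonempty closed walk with pairwise distinct edges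
  (this covers loops and pairs of parallel edges).\<close>
definition acyclic_edges :: "('e \<Rightarrow> 'v set) \<Rightarrow> 'e set \<Rightarrow> bool" where
  "acyclic_edges ends J \<longleftrightarrow> \<not> (\<exists>es vs. es \<noteq> [] \<and> distinct es \<and> set es \<subseteq> J \<and>
        is_walk ends es vs \<and> hd vs = last vs)"

definition graphic_indep :: "('e \<Rightarrow> 'v set) \<Rightarrow> 'e set \<Rightarrow> 'e set \<Rightarrow> bool" where
  "graphic_indep ends E J \<longleftrightarrow> J \<subseteq> E \<and> acyclic_edges ends J"

definition graphic_basis :: "('e \<Rightarrow> 'v set) \<Rightarrow> 'e set \<Rightarrow> 'e set \<Rightarrow> bool" where
  "graphic_basis ends E J \<longleftrightarrow> graphic_indep ends E J \<and>
     (\<forall>e\<in>E - J. \<not> graphic_indep ends E (insert e J))"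

definition simple_graph :: "'a set \<Rightarrow> 'a set set \<Rightarrow> bool" where
  "simple_graph W F \<longleftrightarrow> finite W \<and> (\<forall>e\<in>F. e \<subseteq> W \<and> card e = 2)"

definition spanning_tree :: "'a set \<Rightarrow> 'a set set \<Rightarrow> 'a set set \<Rightarrow> bool" where
  "spanning_tree W F T \<longleftrightarrow> T \<subseteq> F \<and> acyclic_edges id T \<and>
     (\<forall>u\<in>W. \<forall>v\<in>W. reach id T u v)"

definition S_wide :: "'a \<Rightarrow> 'a set \<Rightarrow> 'a set set \<Rightarrow> bool" where
  "S_wide r1 S T \<longleftrightarrow> (\<forall>a\<in>S. \<forall>b\<in>S. a \<noteq> b \<longrightarrow> \<not> reach id {e\<in>T. r1 \<notin> e} a b)"

text \<open>H' : new vertices r 2, ..., r k, and edge {r i, x} for each edge {r 1, x} of H.\<close>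
definition Fprime :: "(nat \<Rightarrow> 'a) \<Rightarrow> nat \<Rightarrow> 'a set set \<Rightarrow> 'a set set" where
  "Fprime r k F = F \<union> {{r i, x} | i x. i \<in> {2..k} \<and> {r 1, x} \<in> F}"

text \<open>Identification of r 1..r k (for H'_1), resp. s 1..s k (for H'_2).\<close>
definition ident :: "(nat \<Rightarrow> 'a) \<Rightarrow> nat \<Rightarrow> 'a \<Rightarrow> 'a" where
  "ident t k v = (if v \<in> t ` {1..k} then t 1 else v)"

definition f_map :: "(nat \<Rightarrow> 'a) \<Rightarrow> nat \<Rightarrow> 'a set \<Rightarrow> 'a set" where
  "f_map r k e = ident r k ` e"

definition g_map :: "(nat \<Rightarrow> 'a) \<Rightarrow> nat \<Rightarrow> 'a set set \<Rightarrow> 'a set set" where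
  "g_map r k J = f_map r k ` J"

end

theory Submission
  imports Defs
begin


lemma is_walk_Nil: "is_walk ends [] vs \<longleftrightarrow> (\<exists>v. vs = [v])"
  by (auto simp: is_walk_def length_Suc_conv)

lemma is_walk_Cons: "is_walk ends (e#es) vs \<longleftrightarrow>
   (\<exists>v vs'. vs = v # vs' \<and> ends e = {v, hd vs'} \<and> is_walk ends es vs')"
proof
  assume "is_walk ends (e#es) vs"
  then obtain v vs' where vs: "vs = v # vs'" and l: "length vs' = Suc (length es)"
    and h: "\<forall>i<Suc (length es). ends ((e#es) ! i) = {vs ! i, vs ! Suc i}"
    by (auto simp: is_walk_def length_Suc_conv)
  have "ends e = {v, hd vs'}" using h[rule_format, of 0] vs l by (cases vs') auto
  moreover have "is_walk ends es vs'" using h l vs by (auto simp: is_walk_def)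
  ultimately show "\<exists>v vs'. vs = v # vs' \<and> ends e = {v, hd vs'} \<and> is_walk ends es vs'"
    using vs by blast
next
  assume "\<exists>v vs'. vs = v # vs' \<and> ends e = {v, hd vs'} \<and> is_walk ends es vs'"
  then obtain v vs' where vs: "vs = v # vs'" and e: "ends e = {v, hd vs'}" and w: "is_walk ends es vs'"
    by blast
  show "is_walk ends (e#es) vs"
    unfolding is_walk_def
  proof (intro conjI)
    show "length vs = Suc (length (e # es))" using vs w by (simp add: is_walk_def)
    show "\<forall>i<length (e # es). ends ((e # es) ! i) = {vs ! i, vs ! Suc i}"
    proof -
      have "vs' \<noteq> []" using w by (auto simp: is_walk_def)
      then have "hd vs' = vs' ! 0" by (simp add: hd_conv_nth)
      then show ?thesis using vs w e by (auto simp: is_walk_def All_less_Suc2)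
    qed
  qed
qed

lemma walk_nonempty: "is_walk ends es vs \<Longrightarrow> vs \<noteq> []"
  by (auto simp: is_walk_def)

lemma walk_append:
  "is_walk ends es1 vs1 \<Longrightarrow> is_walk ends es2 vs2 \<Longrightarrow> last vs1 = hd vs2 \<Longrightarrow>
   is_walk ends (es1 @ es2) (vs1 @ tl vs2)"
proof (induction es1 arbitrary: vs1)
  case Nil
  then show ?case using walk_nonempty[OF Nil(2)] by (auto simp: is_walk_Nil)
next
  case (Cons e es1)
  then obtain v vs' where vs: "vs1 = v # vs'" and e: "ends e = {v, hd vs'}" and w: "is_walk ends es1 vs'"
    by (auto simp: is_walk_Cons)
  have ne: "vs' \<noteq> []" using walk_nonempty[OF w] .
  have "is_walk ends (es1 @ es2) (vs' @ tl vs2)" using Cons.IH[OF w Cons.prems(2)] Cons.prems(3) vs ne by simp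
  then show ?case using vs e ne by (auto simp: is_walk_Cons)
qed

lemma walk_rev: "is_walk ends es vs \<Longrightarrow> is_walk ends (rev es) (rev vs)"
proof (induction es arbitrary: vs)
  case Nil then show ?case by (auto simp: is_walk_Nil)
next
  case (Cons e es)
  then obtain v vs' where vs: "vs = v # vs'" and e: "ends e = {v, hd vs'}" and w: "is_walk ends es vs'"
    by (auto simp: is_walk_Cons)
  have ne: "vs' \<noteq> []" using walk_nonempty[OF w] .
  have w1: "is_walk ends (rev es) (rev vs')" using Cons.IH[OF w] .
  have w2: "is_walk ends [e] [hd vs', v]" using e by (auto simp: is_walk_Cons is_walk_Nil insert_commute)
  have "is_walk ends (rev es @ [e]) (rev vs' @ tl [hd vs', v])"
    using walk_append[OF w1 w2] ne by (simp add: last_rev)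
  then show ?case using vs by simp
qed

lemma walk_drop: "is_walk ends es vs \<Longrightarrow> p < length vs \<Longrightarrow> is_walk ends (drop p es) (drop p vs)"
  by (auto simp: is_walk_def add.commute)

lemma walk_vmap: "is_walk ends es vs \<Longrightarrow> (\<And>e. ends' e = q ` ends e) \<Longrightarrow> is_walk ends' es (map q vs)"
  by (auto simp: is_walk_def)

lemma walk_emap: "is_walk ends es vs \<Longrightarrow> (\<And>e. e \<in> set es \<Longrightarrow> ends' (\<phi> e) = ends e) \<Longrightarrow>
   is_walk ends' (map \<phi> es) vs"
  by (auto simp: is_walk_def)

lemma reach_refl: "reach ends E u u"
  unfolding reach_def by (rule exI[of _ "[]"], rule exI[of _ "[u]"]) (simp add: is_walk_Nil)

lemma reach_edge: "e \<in> E \<Longrightarrow> ends e = {u, v} \<Longrightarrow> reach ends E u v"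
  unfolding reach_def by (rule exI[of _ "[e]"], rule exI[of _ "[u,v]"]) (simp add: is_walk_Cons is_walk_Nil)

lemma reach_trans: "reach ends E u v \<Longrightarrow> reach ends E v w \<Longrightarrow> reach ends E u w"
proof -
  assume "reach ends E u v" "reach ends E v w"
  then obtain es1 vs1 es2 vs2 where a: "set es1 \<subseteq> E" "is_walk ends es1 vs1" "hd vs1 = u" "last vs1 = v"
    and b: "set es2 \<subseteq> E" "is_walk ends es2 vs2" "hd vs2 = v" "last vs2 = w"
    unfolding reach_def by blast
  have w: "is_walk ends (es1 @ es2) (vs1 @ tl vs2)" using walk_append[OF a(2) b(2)] a b by simp
  have n1: "vs1 \<noteq> []" using walk_nonempty[OF a(2)] .
  have n2: "vs2 \<noteq> []" using walk_nonempty[OF b(2)] .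
  have "last (vs1 @ tl vs2) = w"
  proof (cases "tl vs2 = []")
    case True
    then have "vs2 = [hd vs2]" using n2 by (cases vs2) auto
    then show ?thesis using a b True by (metis last_ConsL last_appendL)
  next
    case False
    then show ?thesis using b n2 by (simp add: last_tl)
  qed
  then show "reach ends E u w" unfolding reach_def using w a b n1 by (intro exI[of _ "es1 @ es2"] exI[of _ "vs1 @ tl vs2"]) auto
qed

lemma reach_sym: "reach ends E u v \<Longrightarrow> reach ends E v u"
  unfolding reach_def
  by (metis walk_rev set_rev hd_rev last_rev)

lemma reach_mono: "reach ends E u v \<Longrightarrow> E \<subseteq> E' \<Longrightarrow> reach ends E' u v"
  unfolding reach_def by blast

lemma reach_vmap: "reach ends E u v \<Longrightarrow> (\<And>e. ends' e = q ` ends e) \<Longrightarrow> reach ends' E (q u) (q v)"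
  unfolding reach_def
  by (metis walk_vmap walk_nonempty hd_map last_map)

lemma reach_emap: "reach ends E u v \<Longrightarrow> (\<And>e. e \<in> E \<Longrightarrow> \<phi> e \<in> E' \<and> ends' (\<phi> e) = ends e) \<Longrightarrow>
   reach ends' E' u v"
proof -
  assume r: "reach ends E u v" and h: "\<And>e. e \<in> E \<Longrightarrow> \<phi> e \<in> E' \<and> ends' (\<phi> e) = ends e"
  then obtain es vs where a: "set es \<subseteq> E" "is_walk ends es vs" "hd vs = u" "last vs = v"
    unfolding reach_def by blast
  have "is_walk ends' (map \<phi> es) vs" using walk_emap[OF a(2)] h a(1) by blast
  moreover have "set (map \<phi> es) \<subseteq> E'" using a(1) h by auto
  ultimately show ?thesis unfolding reach_def using a by blast
qed

lemma walk_cut: "is_walk ends es vs \<Longrightarrow> set es \<subseteq> E \<Longrightarrow>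
  (\<And>e a b. e \<in> E \<Longrightarrow> ends e = {a,b} \<Longrightarrow> (a \<in> X \<longleftrightarrow> b \<in> X)) \<Longrightarrow> hd vs \<in> X \<Longrightarrow> last vs \<in> X"
proof (induction es arbitrary: vs)
  case Nil then show ?case by (auto simp: is_walk_Nil)
next
  case (Cons e es)
  then obtain v vs' where vs: "vs = v # vs'" and e: "ends e = {v, hd vs'}" and w: "is_walk ends es vs'"
    by (auto simp: is_walk_Cons)
  have ne: "vs' \<noteq> []" using walk_nonempty[OF w] .
  have "hd vs' \<in> X" using Cons.prems(2-4) e vs by auto
  then have "last vs' \<in> X" using Cons.IH[OF w] Cons.prems(2,3) by auto
  then show ?case using vs ne by simp
qed

lemma reach_cut: "reach ends E u v \<Longrightarrow>
  (\<And>e a b. e \<in> E \<Longrightarrow> ends e = {a,b} \<Longrightarrow> (a \<in> X \<longleftrightarrow> b \<in> X)) \<Longrightarrow> u \<in> X \<Longrightarrow> v \<in> X"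
  unfolding reach_def using walk_cut by metis

lemma walk_path: "is_walk ends es vs \<Longrightarrow> set es \<subseteq> E \<Longrightarrow>
  \<exists>es' vs'. set es' \<subseteq> E \<and> is_walk ends es' vs' \<and> hd vs' = hd vs \<and> last vs' = last vs \<and> distinct vs'"
proof (induction es arbitrary: vs)
  case Nil then show ?case by (auto simp: is_walk_Nil intro!: exI[of _ "[]"] exI[of _ vs])
next
  case (Cons e es)
  then obtain v vs' where vs: "vs = v # vs'" and e: "ends e = {v, hd vs'}" and w: "is_walk ends es vs'"
    by (auto simp: is_walk_Cons)
  have ne: "vs' \<noteq> []" using walk_nonempty[OF w] .
  obtain es2 vs2 where a: "set es2 \<subseteq> E" "is_walk ends es2 vs2" "hd vs2 = hd vs'" "last vs2 = last vs'" "distinct vs2"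
    using Cons.IH[OF w] Cons.prems by auto
  have ne2: "vs2 \<noteq> []" using walk_nonempty[OF a(2)] .
  show ?case
  proof (cases "v \<in> set vs2")
    case True
    then obtain p where p: "p < length vs2" "vs2 ! p = v" by (auto simp: in_set_conv_nth)
    have "is_walk ends (drop p es2) (drop p vs2)" using walk_drop[OF a(2) p(1)] .
    moreover have "set (drop p es2) \<subseteq> E" using a(1) by (meson order.trans set_drop_subset)
    moreover have "hd (drop p vs2) = hd vs" using p vs by (simp add: hd_drop_conv_nth)
    moreover have "last (drop p vs2) = last vs" using p vs a ne by simp
    moreover have "distinct (drop p vs2)" using a(5) by simp
    ultimately show ?thesis by blast
  next
    case False
    have "is_walk ends (e # es2) (v # vs2)" using e a(2,3) by (auto simp: is_walk_Cons)
    moreover have "set (e # es2) \<subseteq> E" using a(1) Cons.prems by auto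
    ultimately show ?thesis using False a vs ne ne2 by (intro exI[of _ "e#es2"] exI[of _ "v#vs2"]) auto
  qed
qed

lemma path_distinct_edges: "is_walk ends es vs \<Longrightarrow> distinct vs \<Longrightarrow> distinct es"
proof (induction es arbitrary: vs)
  case Nil then show ?case by simp
next
  case (Cons e es)
  then obtain v vs' where vs: "vs = v # vs'" and e: "ends e = {v, hd vs'}" and w: "is_walk ends es vs'"
    by (auto simp: is_walk_Cons)
  have "e \<notin> set es"
  proof
    assume "e \<in> set es"
    then obtain j where j: "j < length es" "es ! j = e" by (auto simp: in_set_conv_nth)
    have "ends e = {vs' ! j, vs' ! Suc j}" using w j by (auto simp: is_walk_def)
    then have "v \<in> {vs' ! j, vs' ! Suc j}" using e by auto
    moreover have "Suc j < length vs'" using w j by (auto simp: is_walk_def)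
    ultimately have "v \<in> set vs'" by auto
    then show False using Cons.prems vs by simp
  qed
  then show ?case using Cons.IH[OF w] Cons.prems vs by simp
qed

lemma cycle_of_reach:
  assumes "e \<notin> J" "ends e = {u, v}" "reach ends J v u"
  shows "\<not> acyclic_edges ends (insert e J)"
proof -
  obtain es vs where a: "set es \<subseteq> J" "is_walk ends es vs" "hd vs = v" "last vs = u"
    using assms(3) unfolding reach_def by blast
  obtain es' vs' where b: "set es' \<subseteq> J" "is_walk ends es' vs'" "hd vs' = v" "last vs' = u" "distinct vs'"
    using walk_path[OF a(2,1)] a by auto
  have d: "distinct es'" using path_distinct_edges[OF b(2,5)] .
  have ne: "vs' \<noteq> []" using walk_nonempty[OF b(2)] .
  have "is_walk ends (e # es') (u # vs')" using assms(2) b by (auto simp: is_walk_Cons)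
  moreover have "distinct (e # es')" using d b(1) assms(1) by auto
  moreover have "set (e # es') \<subseteq> insert e J" using b(1) by auto
  moreover have "hd (u # vs') = last (u # vs')" using b ne by simp
  ultimately show ?thesis unfolding acyclic_edges_def by blast
qed

lemma acyclic_no_reach:
  assumes "acyclic_edges ends J" "e \<in> J" "ends e = {u, v}"
  shows "\<not> reach ends (J - {e}) v u"
  using cycle_of_reach[of e "J - {e}" ends u v] assms by (metis Diff_iff insert_Diff singletonI)

lemma not_acyclic_reach:
  assumes "\<not> acyclic_edges ends J"
  shows "\<exists>e\<in>J. \<exists>u v. ends e = {u, v} \<and> reach ends (J - {e}) v u"
proof -
  obtain es vs where a: "es \<noteq> []" "distinct es" "set es \<subseteq> J" "is_walk ends es vs" "hd vs = last vs"
    using assms unfolding acyclic_edges_def by blast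
  obtain e es' where es: "es = e # es'" using a(1) by (cases es) auto
  obtain v vs' where vs: "vs = v # vs'" and e: "ends e = {v, hd vs'}" and w: "is_walk ends es' vs'"
    using a(4) es by (auto simp: is_walk_Cons)
  have ne: "vs' \<noteq> []" using walk_nonempty[OF w] .
  have "set es' \<subseteq> J - {e}" using a(2,3) es by auto
  then have "reach ends (J - {e}) (hd vs') (last vs')" unfolding reach_def using w by blast
  moreover have "last vs' = v" using a(5) vs ne by simp
  ultimately show ?thesis using e es a(3) by auto
qed

lemma acyclic_quot:
  assumes acyc: "acyclic_edges id J" and two: "\<forall>e\<in>J. \<exists>a b. e = {a,b}"
    and sep: "\<forall>a\<in>S. \<forall>b\<in>S. a \<noteq> b \<longrightarrow> \<not> reach id J a b" and s0: "s0 \<in> S"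
    and q: "\<And>v. q v = (if v \<in> S then s0 else v)"
  shows "acyclic_edges (\<lambda>e. q ` e) J"
proof (rule ccontr)
  assume "\<not> acyclic_edges (\<lambda>e. q ` e) J"
  then have "\<exists>e\<in>J. \<exists>u v. q ` e = {u, v} \<and> reach (\<lambda>e. q ` e) (J - {e}) v u"
    by (rule not_acyclic_reach)
  then obtain e u v where e: "e \<in> J" "q ` e = {u, v}" "reach (\<lambda>e. q ` e) (J - {e}) v u"
    by blast
  obtain a b where ab: "e = {a, b}" using two e(1) by metis
  have nr: "\<not> reach id (J - {e}) a b" if "e = {a, b}" for a b
    using acyclic_no_reach[OF acyc e(1), of b a] that by (simp add: insert_commute)
  have key: False if eab: "e = {a, b}" and rq: "reach (\<lambda>e. q ` e) (J - {e}) (q a) (q b)"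
    and AS: "{w. reach id (J - {e}) a w} \<inter> S = {}" for a b
  proof -
    define A where "A = {w. reach id (J - {e}) a w}"
    have qA: "q w \<in> A \<longleftrightarrow> w \<in> A" for w
    proof (cases "w \<in> S")
      case True
      have "q w = s0" using True q[of w] by simp
      moreover have "s0 \<notin> A" "w \<notin> A" using AS s0 True unfolding A_def by blast+
      ultimately show ?thesis by simp
    next
      case False
      then show ?thesis using q[of w] by simp
    qed
    have cl: "c \<in> A \<longleftrightarrow> d \<in> A" if "e' \<in> J - {e}" "q ` e' = {c, d}" for e' c d
    proof -
      have "e' \<in> J" using that(1) by simp
      then obtain a' b' where e': "e' = {a', b'}" using two by metis
      have r: "reach id (J - {e}) a' b'" using reach_edge[OF that(1), of id a' b'] e' by simp
      have "a' \<in> A \<Longrightarrow> b' \<in> A" unfolding A_def using reach_trans[OF _ r] by simp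
      moreover have "b' \<in> A \<Longrightarrow> a' \<in> A" unfolding A_def using reach_trans[OF _ reach_sym[OF r]] by simp
      ultimately have "a' \<in> A \<longleftrightarrow> b' \<in> A" by blast
      then have "q a' \<in> A \<longleftrightarrow> q b' \<in> A" using qA by blast
      moreover have "{q a', q b'} = {c, d}" using that(2) e' by simp
      ultimately show ?thesis by (auto simp: doubleton_eq_iff)
    qed
    have aA: "a \<in> A" unfolding A_def using reach_refl by fast
    have "q a \<in> A" using qA aA by blast
    then have "q b \<in> A" using reach_cut[OF rq, of A] cl by blast
    then have "b \<in> A" using qA by blast
    then show False using nr[OF eab] unfolding A_def by simp
  qed
  have qe: "q ` e = {q a, q b}" using ab by simp
  have r1: "reach (\<lambda>e. q ` e) (J - {e}) (q a) (q b)"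
  proof -
    have "(q a = u \<and> q b = v) \<or> (q a = v \<and> q b = u)" using e(2) qe by (auto simp: doubleton_eq_iff)
    then show ?thesis using e(3) reach_sym[OF e(3)] by auto
  qed
  have r2: "reach (\<lambda>e. q ` e) (J - {e}) (q b) (q a)" using reach_sym[OF r1] .
  have "{w. reach id (J - {e}) a w} \<inter> S = {} \<or> {w. reach id (J - {e}) b w} \<inter> S = {}"
  proof (rule ccontr)
    assume "\<not> ?thesis"
    then obtain t1 t2 where t: "t1 \<in> S" "t2 \<in> S" "reach id (J - {e}) a t1" "reach id (J - {e}) b t2"
      by blast
    have "reach id J a b" using reach_edge[OF e(1), of id a b] ab by simp
    have t3: "reach id J a t1" using reach_mono[OF t(3)] by blast
    have t4: "reach id J b t2" using reach_mono[OF t(4)] by blast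
    have "reach id J t1 t2"
      using reach_trans[OF reach_trans[OF reach_sym[OF t3] \<open>reach id J a b\<close>] t4] .
    then have "t1 = t2" using sep t by blast
    have t5: "reach id (J - {e}) t1 b" using reach_sym[OF t(4)] \<open>t1 = t2\<close> by simp
    have "reach id (J - {e}) a b" using reach_trans[OF t(3) t5] .
    then show False using nr ab by blast
  qed
  moreover have "e = {b, a}" using ab by (simp add: insert_commute)
  ultimately show False using key[OF ab r1] key[OF _ r2] by blast
qed



theorem lemma8:
  fixes W :: "'a set" and F :: "'a set set" and r s :: "nat \<Rightarrow> 'a" and k :: nat
    and T :: "'a set set"
  assumes "simple_graph W F"
    and "r 1 \<in> W"
    and "k \<ge> 2"
    and "inj_on s {1..k}" and "s ` {1..k} \<subseteq> W - {r 1}"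
    and "\<forall>e\<in>F. \<not> e \<subseteq> s ` {1..k}"
    and "inj_on r {1..k}" and "\<forall>i\<in>{2..k}. r i \<notin> W"
    and "spanning_tree W F T" and "S_wide (r 1) (s ` {1..k}) T"
  shows "\<exists>J \<subseteq> Fprime r k F.
           graphic_basis (\<lambda>e. ident r k ` e) (Fprime r k F) J \<and>
           graphic_basis (\<lambda>e. ident s k ` e) (Fprime r k F) J \<and>
           g_map r k J = T"
proof -
  note sg = assms(1) and r1W = assms(2) and k2 = assms(3) and sinj = assms(4) and sW = assms(5)
    and rinj = assms(7) and rW = assms(8) and st = assms(9) and sw = assms(10)
  define T0 where "T0 = {e\<in>T. r 1 \<notin> e}"
  define E' where "E' = Fprime r k F"
  define p where "p = ident r k"
  define q where "q = ident s k"
  have Fe: "\<exists>a b. e = {a,b} \<and> a \<noteq> b \<and> a \<in> W \<and> b \<in> W" if "e \<in> F" for e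
  proof -
    have "e \<subseteq> W" "card e = 2" using sg that unfolding simple_graph_def by auto
    then show ?thesis by (auto simp: card_2_iff)
  qed
  have TF: "T \<subseteq> F" and Tac: "acyclic_edges id T" and Tsp: "\<And>u v. u \<in> W \<Longrightarrow> v \<in> W \<Longrightarrow> reach id T u v"
    using st unfolding spanning_tree_def by auto
  have Te: "\<exists>a b. e = {a,b} \<and> a \<noteq> b \<and> a \<in> W \<and> b \<in> W" if "e \<in> T" for e
    using Fe TF that by auto
  have TW: "e \<subseteq> W" if "e \<in> T" for e using Te[OF that] by auto
  have Tr1: "\<exists>x. e = {r 1, x} \<and> x \<in> W \<and> x \<noteq> r 1" if "e \<in> T" "r 1 \<in> e" for e
    using Te[OF that(1)] that(2) by (auto simp: insert_commute)
  have rnW: "r i \<notin> W" if "i \<in> {2..k}" for i using rW that by blast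
  have p_W: "p w = w" if "w \<in> W" "w \<noteq> r 1" for w
  proof -
    have "w \<notin> r ` {1..k}"
    proof
      assume "w \<in> r ` {1..k}"
      then obtain j where j: "j \<in> {1..k}" "w = r j" by blast
      show False
      proof (cases "j = 1")
        case True then show False using j that by simp
      next
        case False then have "j \<in> {2..k}" using j by auto
        then show False using rnW j that by blast
      qed
    qed
    then show ?thesis unfolding p_def ident_def by simp
  qed
  have p_r: "p (r i) = r 1" if "i \<in> {1..k}" for i using that unfolding p_def ident_def by auto
  have q_eq: "q v = (if v \<in> s ` {1..k} then s 1 else v)" for v unfolding q_def ident_def by simp
  have sWi: "s i \<in> W" "s i \<noteq> r 1" if "i \<in> {1..k}" for i
  proof -
    have "s i \<in> s ` {1..k}" using that by (rule imageI)
    then show "s i \<in> W" "s i \<noteq> r 1" using sW by blast+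
  qed
  have swide: "i = j" if "i \<in> {1..k}" "j \<in> {1..k}" "reach id T0 (s i) (s j)" for i j
  proof (rule ccontr)
    assume "i \<noteq> j"
    then have "s i \<noteq> s j" using sinj that(1,2) by (meson inj_on_contraD)
    then show False using sw that unfolding S_wide_def T0_def by blast
  qed
  have iso: "w = v" if "\<forall>e\<in>E. v \<notin> e" "reach id E v w" for E v w
  proof -
    have "w \<in> {v}"
      by (rule reach_cut[OF that(2)]) (use that(1) in auto)
    then show ?thesis by simp
  qed
  have T0T: "T0 \<subseteq> T" unfolding T0_def by auto
  have T0W: "e \<subseteq> W" if "e \<in> T0" for e using TW T0T that by auto
  have r_T0: "\<not> reach id T0 (r j) (s i)" if "j \<in> {1..k}" "i \<in> {1..k}" for i j
  proof
    assume h: "reach id T0 (r j) (s i)"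
    have "\<forall>e\<in>T0. r j \<notin> e"
    proof (cases "j = 1")
      case True then show ?thesis unfolding T0_def by auto
    next
      case False then have "j \<in> {2..k}" using that by auto
      then show ?thesis using rnW T0W by blast
    qed
    then have sr: "s i = r j" using iso[OF _ h] by simp
    show False
    proof (cases "j = 1")
      case True then show False using sr sWi[OF that(2)] by simp
    next
      case False then have "j \<in> {2..k}" using that(1) by auto
      then show False using sr sWi[OF that(2)] rnW by metis
    qed
  qed
  have comp: "reach id E a c \<longleftrightarrow> reach id E b c" if "e \<in> E" "e = {a, b}" for E e a b c
  proof -
    have r: "reach id E a b" using reach_edge[OF that(1), of id a b] that(2) by simp
    show ?thesis using reach_trans[OF r] reach_trans[OF reach_sym[OF r]] by blast
  qed
  have lemA: "\<exists>x. {r 1, x} \<in> T \<and> reach id T0 v x" if "v \<in> W" "v \<noteq> r 1" for v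
  proof (rule ccontr)
    assume na: "\<not> ?thesis"
    define D where "D = {w. reach id T0 w v}"
    have r1D: "r 1 \<notin> D"
    proof
      assume "r 1 \<in> D"
      then have "reach id T0 (r 1) v" unfolding D_def by simp
      then have "v = r 1" using iso[of T0 "r 1" v] unfolding T0_def by auto
      then show False using that by simp
    qed
    have cl: "a \<in> D \<longleftrightarrow> b \<in> D" if "e \<in> T" "id e = {a, b}" for e a b
    proof (cases "r 1 \<in> e")
      case False
      then have "e \<in> T0" using that unfolding T0_def by simp
      then show ?thesis using comp[of e T0 a b v] that(2) unfolding D_def by simp
    next
      case True
      have "\<exists>x. e = {r 1, x} \<and> x \<in> W \<and> x \<noteq> r 1" using Tr1 that(1) True by blast
      then obtain x where x: "e = {r 1, x}" by blast
      have "x \<notin> D"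
      proof
        assume "x \<in> D"
        then have "reach id T0 v x" using reach_sym unfolding D_def by fastforce
        then show False using na x that(1) by blast
      qed
      then have "a \<notin> D" "b \<notin> D" using r1D x that(2) by (auto simp: doubleton_eq_iff)
      then show ?thesis by simp
    qed
    have "v \<in> D" unfolding D_def using reach_refl by fast
    then have "r 1 \<in> D" using reach_cut[OF Tsp[OF that(1) r1W], of D] cl by blast
    then show False using r1D by simp
  qed
  define lab where "lab x = (if \<exists>i\<in>{1..k}. reach id T0 x (s i)
       then (SOME i. i \<in> {1..k} \<and> reach id T0 x (s i)) else 1)" for x
  have lab_some: "lab x \<in> {1..k} \<and> reach id T0 x (s (lab x))" if "\<exists>i\<in>{1..k}. reach id T0 x (s i)" for x
  proof -
    have "\<exists>i. i \<in> {1..k} \<and> reach id T0 x (s i)" using that by blast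
    then have "(SOME i. i \<in> {1..k} \<and> reach id T0 x (s i)) \<in> {1..k} \<and>
       reach id T0 x (s (SOME i. i \<in> {1..k} \<and> reach id T0 x (s i)))" by (rule someI_ex)
    then show ?thesis unfolding lab_def using that by simp
  qed
  have lab_range: "lab x \<in> {1..k}" for x
    using lab_some[of x] k2 unfolding lab_def by (cases "\<exists>i\<in>{1..k}. reach id T0 x (s i)") auto
  have lab_eq: "lab x = i" if "i \<in> {1..k}" "reach id T0 x (s i)" for x i
  proof -
    have h: "lab x \<in> {1..k}" "reach id T0 x (s (lab x))" using lab_some[of x] that by blast+
    have "reach id T0 (s i) (s (lab x))" using reach_trans[OF reach_sym[OF that(2)] h(2)] .
    then show ?thesis using swide[OF that(1) h(1)] by simp
  qed
  have lab_1: "lab x = 1" if "\<not> (\<exists>i\<in>{1..k}. reach id T0 x (s i))" for x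
    using that unfolding lab_def by simp
  have lab_reach: "reach id T0 x (s (lab x))" if "lab x \<noteq> 1" for x
    using that lab_some[of x] lab_1[of x] by blast
  define R where "R = (\<lambda>x. {r (lab x), x}) ` {x. {r 1, x} \<in> T}"
  define J where "J = T0 \<union> R"
  have Rx: "x \<in> W" "x \<noteq> r 1" if "{r 1, x} \<in> T" for x
    using Te[OF that] by (auto simp: doubleton_eq_iff)
  have JE': "J \<subseteq> E'"
  proof
    fix e assume "e \<in> J"
    then consider "e \<in> T0" | x where "{r 1, x} \<in> T" "e = {r (lab x), x}"
      unfolding J_def R_def by blast
    then show "e \<in> E'"
    proof cases
      case 1 then show ?thesis using T0T TF unfolding E'_def Fprime_def by blast
    next
      case 2
      show ?thesis
      proof (cases "lab x = 1")
        case True then show ?thesis using 2 TF unfolding E'_def Fprime_def by auto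
      next
        case False
        then have "lab x \<in> {2..k}" using lab_range[of x] by auto
        then show ?thesis using 2 TF unfolding E'_def Fprime_def by blast
      qed
    qed
  qed
  have pT0: "p ` e = e" if "e \<in> T0" for e
  proof -
    have "\<forall>w\<in>e. p w = w" using p_W T0W[OF that] that unfolding T0_def by blast
    then show ?thesis by simp
  qed
  have pR: "p ` {r (lab x), x} = {r 1, x}" if "{r 1, x} \<in> T" for x
    using p_r[OF lab_range[of x]] p_W[OF Rx[OF that]] by simp
  have pJ: "p ` e \<in> T" if "e \<in> J" for e
    using that pT0 pR T0T unfolding J_def R_def by auto
  have pJs: "\<exists>e\<in>J. p ` e = t" if "t \<in> T" for t
  proof (cases "r 1 \<in> t")
    case False
    then have "t \<in> T0" using that unfolding T0_def by simp
    then show ?thesis using pT0 unfolding J_def by blast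
  next
    case True
    have "\<exists>x. t = {r 1, x} \<and> x \<in> W \<and> x \<noteq> r 1" using Tr1 that True by blast
    then obtain x where x: "t = {r 1, x}" by blast
    then have "{r (lab x), x} \<in> J" using that unfolding J_def R_def by blast
    then show ?thesis using pR that x by blast
  qed
  have pinj: "inj_on (\<lambda>e. p ` e) J"
  proof
    fix e1 e2 assume e: "e1 \<in> J" "e2 \<in> J" "p ` e1 = p ` e2"
    have c: "(e \<in> T0 \<and> p ` e = e) \<or> (\<exists>x. {r 1, x} \<in> T \<and> e = {r (lab x), x} \<and> p ` e = {r 1, x})"
      if "e \<in> J" for e
    proof -
      have "e \<in> T0 \<or> (\<exists>x. {r 1,x} \<in> T \<and> e = {r (lab x), x})" using that unfolding J_def R_def by blast
      then show ?thesis
      proof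
        assume "e \<in> T0" then show ?thesis using pT0 by simp
      next
        assume "\<exists>x. {r 1,x} \<in> T \<and> e = {r (lab x), x}"
        then obtain x where "{r 1,x} \<in> T" "e = {r (lab x), x}" by blast
        then show ?thesis using pR[of x] by blast
      qed
    qed
    have nT0: "\<not> (e \<in> T0 \<and> p ` e = e \<and> (\<exists>x. p ` e = {r 1, x}))" for e
      unfolding T0_def by auto
    have eqx: "x = y" if "{r 1, x} \<in> T" "{r 1, y} \<in> T" "{r 1, x} = {r 1, y}" for x y
      using Rx[OF that(1)] Rx[OF that(2)] that(3) by (auto simp: doubleton_eq_iff)
    show "e1 = e2"
    proof (cases "e1 \<in> T0 \<and> p ` e1 = e1")
      case c1: True
      show ?thesis
      proof (cases "e2 \<in> T0 \<and> p ` e2 = e2")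
        case True then show ?thesis using c1 e(3) by simp
      next
        case False
        then obtain y where "p ` e2 = {r 1, y}" using c[OF e(2)] by blast
        then have "e1 = {r 1, y}" using c1 e(3) by simp
        then show ?thesis using c1 unfolding T0_def by simp
      qed
    next
      case c1: False
      then obtain x where x: "{r 1, x} \<in> T" "e1 = {r (lab x), x}" "p ` e1 = {r 1, x}" using c[OF e(1)] by blast
      show ?thesis
      proof (cases "e2 \<in> T0 \<and> p ` e2 = e2")
        case True
        then have "e2 = {r 1, x}" using x(3) e(3) by simp
        then show ?thesis using True unfolding T0_def by simp
      next
        case False
        then obtain y where y: "{r 1, y} \<in> T" "e2 = {r (lab y), y}" "p ` e2 = {r 1, y}" using c[OF e(2)] by blast
        have "x = y" using eqx[OF x(1) y(1)] x(3) y(3) e(3) by simp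
        then show ?thesis using x y by simp
      qed
    qed
  qed
  have acyc1: "acyclic_edges (\<lambda>e. p ` e) J"
  proof (rule ccontr)
    assume "\<not> ?thesis"
    then obtain es vs where a: "es \<noteq> []" "distinct es" "set es \<subseteq> J" "is_walk (\<lambda>e. p ` e) es vs"
      "hd vs = last vs" unfolding acyclic_edges_def by blast
    have "is_walk id (map (\<lambda>e. p ` e) es) vs" by (rule walk_emap[OF a(4)]) simp
    moreover have "distinct (map (\<lambda>e. p ` e) es)"
      using a(2,3) pinj by (simp add: distinct_map inj_on_subset)
    moreover have "set (map (\<lambda>e. p ` e) es) \<subseteq> T" using a(3) pJ by auto
    ultimately show False using Tac a(1,5) unfolding acyclic_edges_def by blast
  qed
  have acycJ: "acyclic_edges id J"
  proof (rule ccontr)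
    assume "\<not> ?thesis"
    then obtain es vs where a: "es \<noteq> []" "distinct es" "set es \<subseteq> J" "is_walk id es vs"
      "hd vs = last vs" unfolding acyclic_edges_def by blast
    have "is_walk (\<lambda>e. p ` e) es (map p vs)" by (rule walk_vmap[OF a(4)]) simp
    moreover have "hd (map p vs) = last (map p vs)"
      using a(5) walk_nonempty[OF a(4)] by (simp add: hd_map last_map)
    ultimately show False using acyc1 a(1,2,3) unfolding acyclic_edges_def by blast
  qed
  have E'sh: "\<exists>a b. e = {a,b} \<and> a \<in> W \<union> r ` {2..k} \<and> b \<in> W \<union> r ` {2..k}" if "e \<in> E'" for e
  proof -
    have "e \<in> F \<or> (\<exists>i x. e = {r i, x} \<and> i \<in> {2..k} \<and> {r 1, x} \<in> F)"
      using that unfolding E'_def Fprime_def by blast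
    then show ?thesis
    proof
      assume "e \<in> F" then show ?thesis using Fe by blast
    next
      assume "\<exists>i x. e = {r i, x} \<and> i \<in> {2..k} \<and> {r 1, x} \<in> F"
      then obtain i x where ix: "e = {r i, x}" "i \<in> {2..k}" "{r 1, x} \<in> F" by blast
      have "x \<in> W" using Fe[OF ix(3)] by (auto simp: doubleton_eq_iff)
      then show ?thesis using ix by blast
    qed
  qed
  have pV: "p a \<in> W" if "a \<in> W \<union> r ` {2..k}" for a
  proof (cases "a = r 1")
    case True then show ?thesis using p_r[of 1] k2 r1W by simp
  next
    case False
    show ?thesis
    proof (cases "a \<in> W")
      case True then show ?thesis using p_W False by simp
    next
      case f2: False
      have "a \<in> r ` {2..k}" using that f2 by blast
      then obtain i where "i \<in> {2..k}" "a = r i" by blast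
      then show ?thesis using p_r[of i] r1W by simp
    qed
  qed
  have basis1: "graphic_basis (\<lambda>e. p ` e) E' J"
    unfolding graphic_basis_def graphic_indep_def
  proof (intro conjI JE' acyc1 ballI)
    fix e assume e: "e \<in> E' - J"
    obtain a b where ab: "e = {a,b}" "a \<in> W \<union> r ` {2..k}" "b \<in> W \<union> r ` {2..k}" using E'sh e by blast
    have "reach id T (p b) (p a)" using Tsp pV ab by blast
    then have "reach (\<lambda>e. p ` e) J (p b) (p a)"
    proof (rule reach_emap)
      fix t assume "t \<in> T"
      then have "\<exists>e. e \<in> J \<and> p ` e = t" using pJs by blast
      then have "(SOME e. e \<in> J \<and> p ` e = t) \<in> J \<and> p ` (SOME e. e \<in> J \<and> p ` e = t) = t"
        by (rule someI_ex)
      then show "(SOME e. e \<in> J \<and> p ` e = t) \<in> J \<and> p ` (SOME e. e \<in> J \<and> p ` e = t) = id t" by simp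
    qed
    then have "\<not> acyclic_edges (\<lambda>e. p ` e) (insert e J)"
      using cycle_of_reach[of e J "\<lambda>e. p ` e" "p a" "p b"] e ab by simp
    then show "\<not> (insert e J \<subseteq> E' \<and> acyclic_edges (\<lambda>e. p ` e) (insert e J))" by blast
  qed
  have sepi: "\<not> reach id J (s i) (s j)" if ii: "i \<in> {2..k}" and jj: "j \<in> {1..k}" and ji: "j \<noteq> i" for i j
  proof
    assume h: "reach id J (s i) (s j)"
    define X where "X = insert (r i) {w. reach id T0 w (s i)}"
    have i1: "i \<in> {1..k}" using ii by auto
    have cl: "a \<in> X \<longleftrightarrow> b \<in> X" if eJ: "e \<in> J" and eab: "id e = {a, b}" for e a b
    proof -
      have "\<exists>P. \<forall>w\<in>e. w \<in> X \<longleftrightarrow> P"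
      proof -
        consider "e \<in> T0" | x where "{r 1, x} \<in> T" "e = {r (lab x), x}"
          using eJ unfolding J_def R_def by blast
        then show ?thesis
        proof cases
          case 1
          then obtain c d where cd: "e = {c, d}" using Te T0T by blast
          have "c \<in> W" "d \<in> W" using T0W[OF 1] cd by auto
          then have "c \<noteq> r i" "d \<noteq> r i" using rnW ii by auto
          then have "\<forall>w\<in>e. w \<in> X \<longleftrightarrow> reach id T0 c (s i)"
            using comp[OF 1 cd, of "s i"] cd unfolding X_def by auto
          then show ?thesis by blast
        next
          case 2
          have xW: "x \<in> W" using Rx[OF 2(1)] by simp
          have "x \<noteq> r i" using xW rnW ii by auto
          then have xX: "x \<in> X \<longleftrightarrow> lab x = i"
            using lab_eq[OF i1, of x] lab_reach[of x] ii unfolding X_def by auto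
          have "r (lab x) \<in> X \<longleftrightarrow> lab x = i"
          proof -
            have "r (lab x) = r i \<longleftrightarrow> lab x = i"
              using rinj lab_range[of x] i1 by (meson inj_on_contraD)
            moreover have "\<not> reach id T0 (r (lab x)) (s i)" using r_T0[OF lab_range[of x] i1] .
            ultimately show ?thesis unfolding X_def by auto
          qed
          then have "\<forall>w\<in>e. w \<in> X \<longleftrightarrow> lab x = i" using xX 2(2) by auto
          then show ?thesis by blast
        qed
      qed
      then obtain P where "\<forall>w\<in>e. w \<in> X \<longleftrightarrow> P" by blast
      then show ?thesis using eab by auto
    qed
    have "s i \<in> X" unfolding X_def using reach_refl by fast
    then have "s j \<in> X" using reach_cut[OF h, of X] cl by blast
    moreover have "s j \<noteq> r i" using sWi[OF jj] rnW[OF ii] by auto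
    ultimately have "reach id T0 (s j) (s i)" unfolding X_def by simp
    then show False using swide[OF jj i1] ji by simp
  qed
  have sep: "\<forall>a\<in>s ` {1..k}. \<forall>b\<in>s ` {1..k}. a \<noteq> b \<longrightarrow> \<not> reach id J a b"
  proof (intro ballI impI)
    fix a b assume ab: "a \<in> s ` {1..k}" "b \<in> s ` {1..k}" "a \<noteq> b"
    then obtain i j where ij: "i \<in> {1..k}" "j \<in> {1..k}" "a = s i" "b = s j" by blast
    then have "i \<noteq> j" using ab by auto
    show "\<not> reach id J a b"
    proof (cases "i = 1")
      case True
      then have "j \<in> {2..k}" using ij \<open>i \<noteq> j\<close> by auto
      then show ?thesis using sepi[of j i] ij \<open>i \<noteq> j\<close> reach_sym by metis
    next
      case False
      then have "i \<in> {2..k}" using ij by auto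
      then show ?thesis using sepi[of i j] ij \<open>i \<noteq> j\<close> by metis
    qed
  qed
  have Jtwo: "\<forall>e\<in>J. \<exists>a b. e = {a,b}"
    using Te T0T unfolding J_def R_def by blast
  have acyc2: "acyclic_edges (\<lambda>e. q ` e) J"
    by (rule acyclic_quot[OF acycJ Jtwo sep _ q_eq]) (use k2 in auto)
  have rs: "reach id J (r i) (s i)" if "i \<in> {1..k}" for i
  proof -
    have "\<exists>x. {r 1, x} \<in> T \<and> reach id T0 (s i) x" using lemA sWi[OF that] by blast
    then obtain x where x: "{r 1, x} \<in> T" "reach id T0 (s i) x" by blast
    have rx: "reach id T0 x (s i)" using reach_sym[OF x(2)] .
    have "lab x = i" using lab_eq[OF that rx] .
    then have "{r i, x} \<in> J" using x(1) unfolding J_def R_def by blast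
    then have "reach id J (r i) x" using reach_edge[of "{r i, x}" J id] by simp
    moreover have "reach id J x (s i)" by (rule reach_mono[OF rx]) (auto simp: J_def)
    ultimately show ?thesis using reach_trans by fast
  qed
  have reachS: "\<exists>i\<in>{1..k}. reach id J v (s i)" if "v \<in> W \<union> r ` {2..k}" for v
  proof (cases "v \<in> W \<and> v \<noteq> r 1")
    case True
    obtain x where x: "{r 1, x} \<in> T" "reach id T0 v x" using lemA True by blast
    show ?thesis
    proof (cases "\<exists>i\<in>{1..k}. reach id T0 x (s i)")
      case True
      then obtain i where i: "i \<in> {1..k}" "reach id T0 x (s i)" by blast
      have "reach id T0 v (s i)" using reach_trans[OF x(2) i(2)] .
      then have "reach id J v (s i)" by (rule reach_mono) (auto simp: J_def)
      then show ?thesis using i(1) by blast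
    next
      case False
      then have "lab x = 1" using lab_1 by blast
      moreover have "{r (lab x), x} \<in> R" using x(1) unfolding R_def by blast
      ultimately have "{r 1, x} \<in> J" unfolding J_def by simp
      then have "reach id J x (r 1)" using reach_edge[of "{r 1, x}" J id x "r 1"] by (simp add: insert_commute)
      moreover have "reach id J v x" by (rule reach_mono[OF x(2)]) (auto simp: J_def)
      moreover have "reach id J (r 1) (s 1)" using rs[of 1] k2 by simp
      ultimately have "reach id J v (s 1)" using reach_trans by metis
      moreover have "1 \<in> {1..k}" using k2 by simp
      ultimately show ?thesis by blast
    qed
  next
    case False
    then have "v = r 1 \<or> (\<exists>i\<in>{2..k}. v = r i)" using that by blast
    then show ?thesis
    proof
      assume "v = r 1" then show ?thesis using rs[of 1] k2 by force
    next
      assume "\<exists>i\<in>{2..k}. v = r i"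
      then obtain i where "i \<in> {2..k}" "v = r i" by blast
      then show ?thesis using rs[of i] by force
    qed
  qed
  have qreach: "reach (\<lambda>e. q ` e) J (q v) (s 1)" if "v \<in> W \<union> r ` {2..k}" for v
  proof -
    have "\<exists>i\<in>{1..k}. reach id J v (s i)" using reachS[OF that] .
    then obtain i where i: "i \<in> {1..k}" "reach id J v (s i)" by blast
    have "reach (\<lambda>e. q ` e) J (q v) (q (s i))" by (rule reach_vmap[OF i(2)]) simp
    moreover have "q (s i) = s 1" using q_eq i(1) by simp
    ultimately show ?thesis by simp
  qed
  have basis2: "graphic_basis (\<lambda>e. q ` e) E' J"
    unfolding graphic_basis_def graphic_indep_def
  proof (intro conjI JE' acyc2 ballI)
    fix e assume e: "e \<in> E' - J"
    obtain a b where ab: "e = {a,b}" "a \<in> W \<union> r ` {2..k}" "b \<in> W \<union> r ` {2..k}" using E'sh e by blast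
    have "reach (\<lambda>e. q ` e) J (q b) (q a)"
      using reach_trans[OF qreach[OF ab(3)] reach_sym[OF qreach[OF ab(2)]]] .
    then have "\<not> acyclic_edges (\<lambda>e. q ` e) (insert e J)"
      using cycle_of_reach[of e J "\<lambda>e. q ` e" "q a" "q b"] e ab by simp
    then show "\<not> (insert e J \<subseteq> E' \<and> acyclic_edges (\<lambda>e. q ` e) (insert e J))" by blast
  qed
  have gJ: "g_map r k J = T"
  proof -
    have "g_map r k J = (\<lambda>e. p ` e) ` J" unfolding g_map_def f_map_def p_def by simp
    also have "\<dots> = T" using pJ pJs by blast
    finally show ?thesis .
  qed
  show ?thesis
    using JE' basis1 basis2 gJ unfolding E'_def p_def q_def by blast
qed

end
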